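(* Let $n>0$ and let $\{p_j:j\le n\}$ be pairwise Rudin–Keisler incomparable selective ultrafilters on $\omega$. For each $j\le n$ let $\{a^j_k:k\in\omega\}\in p_j$ be a strictly increasing sequence with $a^j_k>k$ for every $k\in\omega$. Then there is a family $\{I_j:j\le n\}$ of subsets of $\omega$ such that (i) $\{a^j_k:k\in I_j\}\in p_j$ for each $j\le n$; and (ii) the intervals $[k,a^j_k]$ for $j\le n$, $k\in I_j$ are pairwise disjoint intervals of $\omega$.
   Context: A selective ultrafilter is a free ultrafilter $p$ on $\omega$ such that for every partition $\{A_n:n\in\omega\}$ of $\omega$ either some $A_n\in p$ or there is $B\in p$ with $|B\cap A_n|=1$ for every $n$. For $p,q$ free ultrafilters, $p\le_{RK}q$ if there is $f:\omega\to\omega$ with $p=\{A\subseteq\omega: f^{-1}(A)\in q\}$; $p,q$ are incomparable if neither $p\le_{RK}q$ nor $q\le_{RK}p$. $[k,a]$ denotes $\{i\in\omega:k\le i\le a\}$. *)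

theory Defs
  imports Main
begin

definition ultrafilter_on_nat :: "nat set set \<Rightarrow> bool" where
  "ultrafilter_on_nat U \<longleftrightarrow>
     UNIV \<in> U \<and> {} \<notin> U \<and>
     (\<forall>A B. A \<in> U \<and> A \<subseteq> B \<longrightarrow> B \<in> U) \<and>
     (\<forall>A B. A \<in> U \<and> B \<in> U \<longrightarrow> A \<inter> B \<in> U) \<and>
     (\<forall>A. A \<in> U \<or> - A \<in> U)"

definition free_ultrafilter_on_nat :: "nat set set \<Rightarrow> bool" where
  "free_ultrafilter_on_nat U \<longleftrightarrow> ultrafilter_on_nat U \<and> (\<forall>A\<in>U. infinite A)"

definition selective :: "nat set set \<Rightarrow> bool" where
  "selective U \<longleftrightarrow> free_ultrafilter_on_nat U \<and>
     (\<forall>A :: nat \<Rightarrow> nat set.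
        (\<forall>n. A n \<noteq> {}) \<and> (\<forall>m n. m \<noteq> n \<longrightarrow> A m \<inter> A n = {}) \<and> (\<Union>n. A n) = UNIV
        \<longrightarrow> (\<exists>n. A n \<in> U) \<or> (\<exists>B\<in>U. \<forall>n. card (B \<inter> A n) = 1))"

definition rk_le :: "nat set set \<Rightarrow> nat set set \<Rightarrow> bool" where
  "rk_le p q \<longleftrightarrow> (\<exists>f :: nat \<Rightarrow> nat. p = {A. f -` A \<in> q})"

definition rk_incomparable :: "nat set set \<Rightarrow> nat set set \<Rightarrow> bool" where
  "rk_incomparable p q \<longleftrightarrow> \<not> rk_le p q \<and> \<not> rk_le q p"

end

theory Submission
  imports Defs
begin

lemma uf_up: "ultrafilter_on_nat U \<Longrightarrow> A \<in> U \<Longrightarrow> A \<subseteq> B \<Longrightarrow> B \<in> U"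
  unfolding ultrafilter_on_nat_def by blast

lemma uf_int: "ultrafilter_on_nat U \<Longrightarrow> A \<in> U \<Longrightarrow> B \<in> U \<Longrightarrow> A \<inter> B \<in> U"
  unfolding ultrafilter_on_nat_def by blast

lemma uf_compl: "ultrafilter_on_nat U \<Longrightarrow> A \<notin> U \<Longrightarrow> - A \<in> U"
  unfolding ultrafilter_on_nat_def by blast

lemma uf_not_both: "ultrafilter_on_nat U \<Longrightarrow> A \<in> U \<Longrightarrow> - A \<notin> U"
proof
  assume u: "ultrafilter_on_nat U" and "A \<in> U" "- A \<in> U"
  then have "A \<inter> - A \<in> U" by (rule uf_int)
  then show False using u unfolding ultrafilter_on_nat_def by simp
qed

lemma uf_Inter: fixes N :: nat assumes "ultrafilter_on_nat U" shows "(\<forall>i\<le>N. Z i \<in> U) \<Longrightarrow> (\<Inter>i\<le>N. Z i) \<in> U"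
proof (induction N)
  case 0
  then show ?case by simp
next
  case (Suc N)
  then have "(\<Inter>i\<le>N. Z i) \<in> U" by simp
  moreover have "Z (Suc N) \<in> U" using Suc by simp
  ultimately have "Z (Suc N) \<inter> (\<Inter>i\<le>N. Z i) \<in> U" using uf_int assms by blast
  then show ?case by (simp add: atMost_Suc)
qed

lemma uf_cong: "ultrafilter_on_nat U \<Longrightarrow> C \<in> U \<Longrightarrow> X \<inter> C = Y \<inter> C \<Longrightarrow> X \<in> U \<Longrightarrow> Y \<in> U"
  by (metis inf_le1 uf_int uf_up)

lemma rk_from_eq:
  assumes u: "ultrafilter_on_nat p" and C: "C \<in> p" and inj: "inj_on f C"
    and eq: "\<forall>D. (f -` D \<in> p) = (g -` D \<in> q)"
  shows "rk_le p q"
proof -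
  let ?h = "inv_into C f \<circ> g"
  have "p = {A. ?h -` A \<in> q}"
  proof (intro set_eqI iffI)
    fix A
    let ?E = "f -` (inv_into C f -` A)"
    have EC: "?E \<inter> C = A \<inter> C" using inj by (auto simp: inv_into_f_f)
    have hq: "?h -` A = g -` (inv_into C f -` A)" by auto
    { assume "A \<in> p"
      then have "?E \<in> p" using uf_cong[OF u C EC[symmetric]] by blast
      then show "A \<in> {A. ?h -` A \<in> q}" using eq hq by simp }
    { assume "A \<in> {A. ?h -` A \<in> q}"
      then have "?E \<in> p" using eq hq by simp
      then show "A \<in> p" using uf_cong[OF u C EC] by blast }
  qed
  then show ?thesis unfolding rk_le_def by blast
qed

lemma sep:
  assumes up: "ultrafilter_on_nat p" and uq: "ultrafilter_on_nat q"
    and C: "C \<in> p" and inj: "inj_on f C" and nrk: "\<not> rk_le p q"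
  shows "\<exists>X\<in>p. \<exists>Y\<in>q. \<forall>x\<in>X. \<forall>y\<in>Y. f x \<noteq> g y"
proof (rule ccontr)
  assume H: "\<not> ?thesis"
  have "\<forall>D. (f -` D \<in> p) = (g -` D \<in> q)"
  proof
    fix D
    show "(f -` D \<in> p) = (g -` D \<in> q)"
    proof
      assume a: "f -` D \<in> p"
      show "g -` D \<in> q"
      proof (rule ccontr)
        assume "g -` D \<notin> q"
        then have "- (g -` D) \<in> q" using uf_compl uq by blast
        then obtain x y where "x \<in> f -` D" "y \<in> - (g -` D)" "f x = g y" using H a by blast
        then show False by simp
      qed
    next
      assume a: "g -` D \<in> q"
      show "f -` D \<in> p"
      proof (rule ccontr)
        assume "f -` D \<notin> p"
        then have "- (f -` D) \<in> p" using uf_compl up by blast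
        then obtain x y where "x \<in> - (f -` D)" "y \<in> g -` D" "f x = g y" using H a by blast
        then show False by simp
      qed
    qed
  qed
  then show False using rk_from_eq[OF up C inj] nrk by blast
qed

lemma card1_eq: "card A = 1 \<Longrightarrow> x \<in> A \<Longrightarrow> y \<in> A \<Longrightarrow> x = y"
  by (metis card_1_singletonE singletonD)

theorem mainTheorem4:
  fixes n :: nat and p :: "nat \<Rightarrow> nat set set" and a :: "nat \<Rightarrow> nat \<Rightarrow> nat"
  assumes "n > 0"
    and "\<forall>j\<le>n. selective (p j)"
    and "\<forall>i\<le>n. \<forall>j\<le>n. i \<noteq> j \<longrightarrow> rk_incomparable (p i) (p j)"
    and "\<forall>j\<le>n. range (a j) \<in> p j"
    and "\<forall>j\<le>n. strict_mono (a j)"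
    and "\<forall>j\<le>n. \<forall>k. a j k > k"
  shows "\<exists>I :: nat \<Rightarrow> nat set.
           (\<forall>j\<le>n. a j ` I j \<in> p j) \<and>
           (\<forall>j\<le>n. \<forall>j'\<le>n. \<forall>k\<in>I j. \<forall>k'\<in>I j'. (j, k) \<noteq> (j', k') \<longrightarrow>
               {k..a j k} \<inter> {k'..a j' k'} = {})"
proof -
  have sel: "\<And>j. j\<le>n \<Longrightarrow> selective (p j)" using assms(2) by auto
  have uf: "\<And>j. j\<le>n \<Longrightarrow> ultrafilter_on_nat (p j)"
    using sel unfolding selective_def free_ultrafilter_on_nat_def by simp
  have fin: "\<And>j A. j\<le>n \<Longrightarrow> finite A \<Longrightarrow> A \<notin> p j"
  proof
    fix j A assume "j \<le> n" "finite A" "A \<in> p j"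
    then show False using sel unfolding selective_def free_ultrafilter_on_nat_def by blast
  qed
  define S where "S = (\<lambda>z. (\<Sum>j\<le>n. a j z) + 1)"
  define m where "m = (\<lambda>i. (S ^^ i) 0)"
  have m0: "m 0 = 0" and mS: "\<And>i. m (Suc i) = S (m i)" by (simp_all add: m_def)
  have aS: "\<And>j z. j \<le> n \<Longrightarrow> a j z < S z"
  proof -
    fix j z assume "j\<le>n"
    then have "a j z \<le> (\<Sum>j\<le>n. a j z)" by (intro member_le_sum) auto
    thus "a j z < S z" by (simp add: S_def)
  qed
  have Sgt: "\<And>z. z < S z" using aS[of 0] assms(6) by (meson le0 order.strict_trans)
  have smono: "strict_mono m" unfolding strict_mono_Suc_iff by (simp add: mS Sgt)
  have mge: "\<And>i. i \<le> m i" using smono by (simp add: strict_mono_imp_increasing)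
  define pi where "pi = (\<lambda>x. LEAST i. x < m (Suc i))"
  have pi1: "\<And>x. x < m (Suc (pi x))"
  proof -
    fix x
    have "x < m (Suc x)" using mge[of "Suc x"] by simp
    then show "x < m (Suc (pi x))" unfolding pi_def by (rule LeastI)
  qed
  have pi2: "\<And>x. m (pi x) \<le> x"
  proof -
    fix x show "m (pi x) \<le> x"
    proof (cases "pi x")
      case 0 then show ?thesis by (simp add: m0)
    next
      case (Suc i)
      then have "i < pi x" by simp
      then have "\<not> x < m (Suc i)" using not_less_Least[of i "\<lambda>i. x < m (Suc i)"]
        unfolding pi_def by blast
      then show ?thesis using Suc by simp
    qed
  qed
  have pi_eq: "\<And>i x. m i \<le> x \<Longrightarrow> x < m (Suc i) \<Longrightarrow> pi x = i"
  proof -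
    fix i x assume h: "m i \<le> x" "x < m (Suc i)"
    have "pi x \<le> i" unfolding pi_def using h(2) by (rule Least_le)
    moreover have "\<not> pi x < i"
    proof
      assume "pi x < i"
      then have "m (Suc (pi x)) \<le> m i" using smono by (simp add: strict_mono_less_eq)
      then show False using pi1[of x] h by simp
    qed
    ultimately show "pi x = i" by simp
  qed
  have pi_mono: "\<And>x y. x \<le> y \<Longrightarrow> pi x \<le> pi y"
  proof (rule ccontr)
    fix x y assume h: "x \<le> y" "\<not> pi x \<le> pi y"
    then have "m (Suc (pi y)) \<le> m (pi x)" using smono by (simp add: strict_mono_less_eq)
    then show False using pi1[of y] pi2[of x] h by simp
  qed
  have key: "\<And>j k. j \<le> n \<Longrightarrow> pi (a j k) \<le> Suc (pi k)"
  proof (rule ccontr)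
    fix j k assume j: "j \<le> n" and h: "\<not> pi (a j k) \<le> Suc (pi k)"
    let ?i = "Suc (pi k)"
    have "k < m ?i" by (rule pi1)
    then have "a j k < a j (m ?i)" using assms(5) j by (simp add: strict_mono_less)
    also have "\<dots> < m (Suc ?i)" using aS[OF j] mS by simp
    also have "\<dots> \<le> m (pi (a j k))" using h smono by (simp add: strict_mono_less_eq)
    also have "\<dots> \<le> a j k" by (rule pi2)
    finally show False by simp
  qed
  define blk where "blk = (\<lambda>i. {x. pi x = i})"
  have blk_ne: "\<And>i. blk i \<noteq> {}"
  proof -
    fix i
    have "pi (m i) = i" using pi_eq[of i "m i"] smono by (simp add: strict_mono_less)
    then show "blk i \<noteq> {}" unfolding blk_def by blast
  qed
  have blk_fin: "\<And>i. finite (blk i)"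
  proof -
    fix i
    have "blk i \<subseteq> {..< m (Suc i)}" unfolding blk_def using pi1 by auto
    then show "finite (blk i)" using finite_subset by blast
  qed
  have "\<forall>j. \<exists>C. j \<le> n \<longrightarrow> C \<in> p j \<and> (\<forall>x\<in>C. \<forall>y\<in>C. pi x = pi y \<longrightarrow> x = y)"
  proof
    fix j
    show "\<exists>C. j \<le> n \<longrightarrow> C \<in> p j \<and> (\<forall>x\<in>C. \<forall>y\<in>C. pi x = pi y \<longrightarrow> x = y)"
    proof (cases "j \<le> n")
      case True
      have p1: "\<forall>i. blk i \<noteq> {}" using blk_ne by blast
      have p2: "\<forall>i i'. i \<noteq> i' \<longrightarrow> blk i \<inter> blk i' = {}" unfolding blk_def by blast
      have p3: "(\<Union>i. blk i) = UNIV" unfolding blk_def by blast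
      have sj: "\<forall>A :: nat \<Rightarrow> nat set.
        (\<forall>n. A n \<noteq> {}) \<and> (\<forall>m n. m \<noteq> n \<longrightarrow> A m \<inter> A n = {}) \<and> (\<Union>n. A n) = UNIV
        \<longrightarrow> (\<exists>n. A n \<in> p j) \<or> (\<exists>B\<in>p j. \<forall>n. card (B \<inter> A n) = 1)"
        using sel[OF True] unfolding selective_def by (rule conjunct2)
      have "(\<exists>i. blk i \<in> p j) \<or> (\<exists>B\<in>p j. \<forall>i. card (B \<inter> blk i) = 1)"
        using sj[rule_format, of blk] p1 p2 p3 by blast
      moreover have "\<not> (\<exists>i. blk i \<in> p j)" using fin[OF True] blk_fin by blast
      ultimately obtain B where B: "B \<in> p j" "\<forall>i. card (B \<inter> blk i) = 1"
        by blast
      have "\<forall>x\<in>B. \<forall>y\<in>B. pi x = pi y \<longrightarrow> x = y"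
      proof (intro ballI impI)
        fix x y assume "x \<in> B" "y \<in> B" "pi x = pi y"
        then have "x \<in> B \<inter> blk (pi x)" "y \<in> B \<inter> blk (pi x)" unfolding blk_def by auto
        then show "x = y" by (rule card1_eq[OF spec[OF B(2)]])
      qed
      then show ?thesis using B by blast
    qed auto
  qed
  from choice[OF this] obtain C where C0: "\<forall>j. j \<le> n \<longrightarrow> C j \<in> p j \<and> (\<forall>x\<in>C j. \<forall>y\<in>C j. pi x = pi y \<longrightarrow> x = y)"
    by blast
  have C: "\<And>j. j \<le> n \<Longrightarrow> C j \<in> p j \<and> (\<forall>x\<in>C j. \<forall>y\<in>C j. pi x = pi y \<longrightarrow> x = y)"
    using C0 by blast
  have "\<forall>ij. \<exists>XY. fst ij \<le> n \<and> snd ij \<le> n \<and> fst ij \<noteq> snd ij \<longrightarrow>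
     fst XY \<in> p (fst ij) \<and> snd XY \<in> p (snd ij) \<and> (\<forall>x\<in>fst XY. \<forall>y\<in>snd XY. pi x \<noteq> pi y \<and> pi x \<noteq> Suc (pi y))"
  proof (intro allI)
    fix ij :: "nat \<times> nat"
    obtain i j where ij: "ij = (i, j)" by fastforce
    have "\<exists>X Y. i \<le> n \<and> j \<le> n \<and> i \<noteq> j \<longrightarrow>
     X \<in> p i \<and> Y \<in> p j \<and> (\<forall>x\<in>X. \<forall>y\<in>Y. pi x \<noteq> pi y \<and> pi x \<noteq> Suc (pi y))"
    proof (cases "i \<le> n \<and> j \<le> n \<and> i \<noteq> j")
      case True
      then have nrk: "\<not> rk_le (p i) (p j)" using assms(3) rk_incomparable_def by blast
      have inj: "inj_on pi (C i)" using C True unfolding inj_on_def by blast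
      obtain X1 Y1 where 1: "X1 \<in> p i" "Y1 \<in> p j" "\<forall>x\<in>X1. \<forall>y\<in>Y1. pi x \<noteq> pi y"
        using sep[OF uf uf _ inj nrk, of pi] C True by blast
      obtain X2 Y2 where 2: "X2 \<in> p i" "Y2 \<in> p j" "\<forall>x\<in>X2. \<forall>y\<in>Y2. pi x \<noteq> Suc (pi y)"
        using sep[OF uf uf _ inj nrk, of "\<lambda>y. Suc (pi y)"] C True by blast
      have "X1 \<inter> X2 \<in> p i" using uf_int uf 1 2 True by blast
      moreover have "Y1 \<inter> Y2 \<in> p j" using uf_int uf 1 2 True by blast
      ultimately show ?thesis using 1 2 by blast
    qed auto
    then obtain X Y where "i \<le> n \<and> j \<le> n \<and> i \<noteq> j \<longrightarrow>
     X \<in> p i \<and> Y \<in> p j \<and> (\<forall>x\<in>X. \<forall>y\<in>Y. pi x \<noteq> pi y \<and> pi x \<noteq> Suc (pi y))" by blast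
    then show "\<exists>XY. fst ij \<le> n \<and> snd ij \<le> n \<and> fst ij \<noteq> snd ij \<longrightarrow>
     fst XY \<in> p (fst ij) \<and> snd XY \<in> p (snd ij) \<and> (\<forall>x\<in>fst XY. \<forall>y\<in>snd XY. pi x \<noteq> pi y \<and> pi x \<noteq> Suc (pi y))"
      by (intro exI[of _ "(X, Y)"]) (simp add: ij)
  qed
  from choice[OF this] obtain F where F: "\<forall>ij. fst ij \<le> n \<and> snd ij \<le> n \<and> fst ij \<noteq> snd ij \<longrightarrow>
     fst (F ij) \<in> p (fst ij) \<and> snd (F ij) \<in> p (snd ij) \<and> (\<forall>x\<in>fst (F ij). \<forall>y\<in>snd (F ij). pi x \<noteq> pi y \<and> pi x \<noteq> Suc (pi y))"
    by blast
  define X where "X = (\<lambda>i j. fst (F (i, j)))"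
  define Y where "Y = (\<lambda>i j. snd (F (i, j)))"
  have XY: "\<And>i j. i \<le> n \<Longrightarrow> j \<le> n \<Longrightarrow> i \<noteq> j \<Longrightarrow>
     X i j \<in> p i \<and> Y i j \<in> p j \<and> (\<forall>x\<in>X i j. \<forall>y\<in>Y i j. pi x \<noteq> pi y \<and> pi x \<noteq> Suc (pi y))"
    unfolding X_def Y_def using F by fastforce
  define Par where "Par = (\<lambda>j. if {x. even (pi x)} \<in> p j then {x. even (pi x)} else {x. odd (pi x)})"
  have Par_in: "\<And>j. j \<le> n \<Longrightarrow> Par j \<in> p j"
  proof -
    fix j assume j: "j \<le> n"
    have e: "- {x. even (pi x)} = {x. odd (pi x)}" by auto
    show "Par j \<in> p j"
    proof (cases "{x. even (pi x)} \<in> p j")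
      case False
      then have "- {x. even (pi x)} \<in> p j" by (rule uf_compl[OF uf[OF j]])
      then show ?thesis using False e unfolding Par_def by simp
    qed (simp add: Par_def)
  qed
  have Par_pr: "\<And>j x y. x \<in> Par j \<Longrightarrow> y \<in> Par j \<Longrightarrow> pi x \<noteq> Suc (pi y)"
    unfolding Par_def by (auto split: if_splits)
  define Z where "Z = (\<lambda>j i. if i = j then UNIV else X j i \<inter> Y i j)"
  define B where "B = (\<lambda>j. range (a j) \<inter> C j \<inter> Par j \<inter> (\<Inter>i\<le>n. Z j i))"
  have B_in: "\<And>j. j \<le> n \<Longrightarrow> B j \<in> p j"
  proof -
    fix j assume j: "j \<le> n"
    have "\<forall>i\<le>n. Z j i \<in> p j"
    proof (intro allI impI)
      fix i assume i: "i \<le> n"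
      show "Z j i \<in> p j"
      proof (cases "i = j")
        case True then show ?thesis using uf[OF j] unfolding Z_def ultrafilter_on_nat_def by simp
      next
        case False then show ?thesis unfolding Z_def using XY[OF j i] XY[OF i j] uf_int[OF uf[OF j]] by auto
      qed
    qed
    then have "(\<Inter>i\<le>n. Z j i) \<in> p j" using uf_Inter uf j by blast
    then show "B j \<in> p j" unfolding B_def using uf_int[OF uf[OF j]] assms(4) j C[OF j] Par_in[OF j]
      by simp
  qed
  define I where "I = (\<lambda>j. a j -` B j)"
  have img: "\<And>j. a j ` I j = B j" unfolding I_def B_def by auto
  have sepxy: "\<And>j j' x y. j \<le> n \<Longrightarrow> j' \<le> n \<Longrightarrow> x \<in> B j \<Longrightarrow> y \<in> B j' \<Longrightarrow> (j, x) \<noteq> (j', y) \<Longrightarrow>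
     pi x \<noteq> pi y \<and> pi x \<noteq> Suc (pi y) \<and> pi y \<noteq> Suc (pi x)"
  proof -
    fix j j' x y assume j: "j \<le> n" and j': "j' \<le> n" and x: "x \<in> B j" and y: "y \<in> B j'"
      and ne: "(j, x) \<noteq> (j', y)"
    show "pi x \<noteq> pi y \<and> pi x \<noteq> Suc (pi y) \<and> pi y \<noteq> Suc (pi x)"
    proof (cases "j = j'")
      case True
      then have "x \<noteq> y" using ne by simp
      have xs: "x \<in> C j" "x \<in> Par j" using x unfolding B_def by auto
      have ys: "y \<in> C j" "y \<in> Par j" using y True unfolding B_def by auto
      have "pi x \<noteq> pi y" using C[OF j] xs ys \<open>x \<noteq> y\<close> by blast
      moreover have "pi x \<noteq> Suc (pi y)" by (rule Par_pr[OF xs(2) ys(2)])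
      moreover have "pi y \<noteq> Suc (pi x)" by (rule Par_pr[OF ys(2) xs(2)])
      ultimately show ?thesis by blast
    next
      case False
      have "x \<in> Z j j'" using x j' unfolding B_def by auto
      then have x1: "x \<in> X j j'" "x \<in> Y j' j" using False unfolding Z_def by auto
      have "y \<in> Z j' j" using y j unfolding B_def by auto
      then have y1: "y \<in> X j' j" "y \<in> Y j j'" using False unfolding Z_def by auto
      have a1: "pi x \<noteq> pi y \<and> pi x \<noteq> Suc (pi y)" using XY[OF j j' False] x1 y1 by blast
      have a2: "pi y \<noteq> Suc (pi x)" using XY[OF j' j] False x1 y1 by blast
      show ?thesis using a1 a2 by blast
    qed
  qed
  have "\<forall>j\<le>n. \<forall>j'\<le>n. \<forall>k\<in>I j. \<forall>k'\<in>I j'. (j, k) \<noteq> (j', k') \<longrightarrow>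
               {k..a j k} \<inter> {k'..a j' k'} = {}"
  proof (intro allI impI ballI)
    fix j j' k k' assume j: "j \<le> n" and j': "j' \<le> n" and k: "k \<in> I j" and k': "k' \<in> I j'"
      and ne: "(j, k) \<noteq> (j', k')"
    have xB: "a j k \<in> B j" using k unfolding I_def by simp
    have yB: "a j' k' \<in> B j'" using k' unfolding I_def by simp
    have "(j, a j k) \<noteq> (j', a j' k')"
      using ne assms(5) j strict_mono_eq by fastforce
    then have d: "pi (a j k) \<noteq> pi (a j' k') \<and> pi (a j k) \<noteq> Suc (pi (a j' k')) \<and> pi (a j' k') \<noteq> Suc (pi (a j k))"
      using sepxy[OF j j' xB yB] by blast
    show "{k..a j k} \<inter> {k'..a j' k'} = {}"
    proof (rule ccontr)
      assume "{k..a j k} \<inter> {k'..a j' k'} \<noteq> {}"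
      then obtain z where "z \<in> {k..a j k} \<inter> {k'..a j' k'}" by blast
      then have z: "k \<le> z" "z \<le> a j k" "k' \<le> z" "z \<le> a j' k'" by auto
      have "pi k \<le> pi z" "pi z \<le> pi (a j k)" "pi k' \<le> pi z" "pi z \<le> pi (a j' k')"
        using z pi_mono by auto
      moreover have "pi (a j k) \<le> Suc (pi k)" "pi (a j' k') \<le> Suc (pi k')" using key j j' by auto
      ultimately show False using d by linarith
    qed
  qed
  moreover have "\<forall>j\<le>n. a j ` I j \<in> p j" using img B_in by simp
  ultimately show ?thesis by blast
qed

end
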